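(* Let $\eta\in\{0,1\}$ and $\alpha\in\{-1,1\}$. Let $\vec G$ be a digraph without loops or multiple arcs, with vertex set $\{v_1,\dots,v_n\}$ and $m$ arcs, and define $$g(\vec G;x)=d_2\big(xI_n-\eta D(\vec G)-\alpha A(\vec G)\big).$$ Then $$(m-n)\,g(\vec G;x)+x\,g'(\vec G;x)=\sum_{\vec e\in E(\vec G)} g(\vec G-\vec e;x),$$ where $g'$ is the derivative with respect to $x$ and $\vec G-\vec e$ is $\vec G$ with the arc $\vec e$ deleted (so $g(\vec G-\vec e;x)=d_2(xI_n-\eta D(\vec G-\vec e)-\alpha A(\vec G-\vec e))$).
   Context: For a digraph $\vec H$ on vertices $v_1,\dots,v_n$, $A(\vec H)=(a_{ij})$ is the adjacency matrix with $a_{ij}=1$ if $(v_i,v_j)$ is an arc and $0$ otherwise, and $D(\vec H)=\mathrm{diag}(d^-(v_1),\dots,d^-(v_n))$ is the diagonal matrix of in-degrees. For an $n\times n$ matrix $M=(m_{ij})$ ($n\ge 2$), the second immanant is $d_2(M)=\sum_{\sigma\in S_n}\chi_2(\sigma)\prod_{s=1}^n m_{s\sigma(s)}$, where $\chi_2$ is the irreducible character of $S_n$ corresponding to the partition $(2,1^{n-2})$. *)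

theory Defs
  imports "HOL-Combinatorics.Permutations" "HOL-Computational_Algebra.Polynomial"
begin

text \<open>Digraphs on vertex set {0..<n} are given by their arc set E of ordered pairs.\<close>

text \<open>Irreducible character of S_n for the partition (2,1^(n-2)):
  chi(sigma) = sign(sigma) * (number of fixed points of sigma - 1).\<close>
definition chi2 :: "nat \<Rightarrow> (nat \<Rightarrow> nat) \<Rightarrow> int" where
  "chi2 n \<sigma> = sign \<sigma> * (int (card {i\<in>{..<n}. \<sigma> i = i}) - 1)"

definition d2 :: "nat \<Rightarrow> (nat \<Rightarrow> nat \<Rightarrow> 'a::comm_ring_1) \<Rightarrow> 'a" where
  "d2 n M = (\<Sum>\<sigma> | \<sigma> permutes {..<n}. of_int (chi2 n \<sigma>) * (\<Prod>s<n. M s (\<sigma> s)))"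

definition indeg :: "(nat \<times> nat) set \<Rightarrow> nat \<Rightarrow> nat" where
  "indeg E j = card {i. (i, j) \<in> E}"

definition adj :: "(nat \<times> nat) set \<Rightarrow> nat \<Rightarrow> nat \<Rightarrow> real" where
  "adj E i j = (if (i, j) \<in> E then 1 else 0)"

definition charmat :: "real \<Rightarrow> real \<Rightarrow> (nat \<times> nat) set \<Rightarrow> nat \<Rightarrow> nat \<Rightarrow> real poly" where
  "charmat \<eta> \<alpha> E i j =
     (if i = j then [:- (\<eta> * real (indeg E i)), 1:] else 0) - [:\<alpha> * adj E i j:]"

definition gpoly :: "nat \<Rightarrow> real \<Rightarrow> real \<Rightarrow> (nat \<times> nat) set \<Rightarrow> real poly" where
  "gpoly n \<eta> \<alpha> E = d2 n (charmat \<eta> \<alpha> E)"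

end

theory Submission
  imports Defs
begin

lemma pderiv_sum_gen: "finite A \<Longrightarrow> pderiv (\<Sum>x\<in>A. f x) = (\<Sum>x\<in>A. pderiv (f x))"
  by (induction A rule: finite_induct) (auto simp: pderiv_add)

lemma smult_sum_right: "smult k (sum f A) = (\<Sum>x\<in>A. smult k (f x))"
  by (induction A rule: infinite_finite_induct) (auto simp: smult_add_right)

lemma euler_prod:
  fixes b :: "nat \<Rightarrow> 'e \<Rightarrow> real" and \<delta> :: "nat \<Rightarrow> real"
  assumes "finite S" "finite E"
    and uniq: "\<forall>e\<in>E. \<forall>s\<in>S. \<forall>t\<in>S. b s e \<noteq> 0 \<longrightarrow> b t e \<noteq> 0 \<longrightarrow> s = t"
  shows "(\<Sum>e\<in>E. \<Prod>s\<in>S. [:(\<Sum>f\<in>E-{e}. b s f), \<delta> s:])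
     = smult (real (card E) - real (card S)) (\<Prod>s\<in>S. [:(\<Sum>f\<in>E. b s f), \<delta> s:])
       + [:0,1:] * pderiv (\<Prod>s\<in>S. [:(\<Sum>f\<in>E. b s f), \<delta> s:])"
  using assms(1) uniq
proof (induction S rule: finite_induct)
  case empty
  then show ?case by (simp add: of_nat_poly)
next
  case (insert a S)
  define Q where "Q = (\<lambda>s. [:(\<Sum>f\<in>E. b s f), \<delta> s:])"
  define P where "P = (\<Prod>s\<in>S. Q s)"
  have IH: "(\<Sum>e\<in>E. \<Prod>s\<in>S. [:(\<Sum>f\<in>E-{e}. b s f), \<delta> s:])
     = smult (real (card E) - real (card S)) P + [:0,1:] * pderiv P"
    using insert by (simp add: P_def Q_def)
  have Qe: "[:(\<Sum>f\<in>E-{e}. b s f), \<delta> s:] = Q s - [:b s e:]" if "e \<in> E" for s e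
    using that assms(2) by (simp add: Q_def sum_diff1)
  have "(\<Sum>e\<in>E. \<Prod>s\<in>insert a S. [:(\<Sum>f\<in>E-{e}. b s f), \<delta> s:])
      = (\<Sum>e\<in>E. (Q a - [:b a e:]) * (\<Prod>s\<in>S. [:(\<Sum>f\<in>E-{e}. b s f), \<delta> s:]))"
    using insert.hyps Qe by (intro sum.cong) auto
  also have "\<dots> = Q a * (\<Sum>e\<in>E. \<Prod>s\<in>S. [:(\<Sum>f\<in>E-{e}. b s f), \<delta> s:])
      - (\<Sum>e\<in>E. smult (b a e) (\<Prod>s\<in>S. [:(\<Sum>f\<in>E-{e}. b s f), \<delta> s:]))"
    by (simp add: algebra_simps sum_distrib_left sum_subtractf)
  also have "(\<Sum>e\<in>E. smult (b a e) (\<Prod>s\<in>S. [:(\<Sum>f\<in>E-{e}. b s f), \<delta> s:]))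
      = (\<Sum>e\<in>E. smult (b a e) P)"
  proof (intro sum.cong refl)
    fix e assume "e \<in> E"
    show "smult (b a e) (\<Prod>s\<in>S. [:(\<Sum>f\<in>E-{e}. b s f), \<delta> s:]) = smult (b a e) P"
    proof (cases "b a e = 0")
      case False
      have "b s e = 0" if "s \<in> S" for s
        using insert.prems \<open>e \<in> E\<close> False that insert.hyps(2) by blast
      then have "(\<Prod>s\<in>S. [:(\<Sum>f\<in>E-{e}. b s f), \<delta> s:]) = P"
        unfolding P_def using Qe[OF \<open>e \<in> E\<close>] by (intro prod.cong) auto
      then show ?thesis by simp
    qed simp
  qed
  also have "(\<Sum>e\<in>E. smult (b a e) P) = smult (\<Sum>e\<in>E. b a e) P"
    by (simp add: smult_sum)
  also have "smult (\<Sum>e\<in>E. b a e) P = (Q a - [:0, \<delta> a:]) * P"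
    by (simp add: Q_def)
  finally have L: "(\<Sum>e\<in>E. \<Prod>s\<in>insert a S. [:(\<Sum>f\<in>E-{e}. b s f), \<delta> s:])
     = Q a * (smult (real (card E) - real (card S)) P + [:0,1:] * pderiv P) - (Q a - [:0, \<delta> a:]) * P"
    using IH by simp
  have dQ: "pderiv (Q a) = [:\<delta> a:]" by (simp add: Q_def pderiv_pCons)
  have X: "[:0, \<delta> a:] = [:0,1:] * [:\<delta> a:]" by simp
  have prodins: "(\<Prod>s\<in>insert a S. [:(\<Sum>f\<in>E. b s f), \<delta> s:]) = Q a * P"
    using insert.hyps by (simp add: P_def Q_def)
  have alg: "Q*(K*P + X*P') - (Q - X*D)*P = (K - 1)*(Q*P) + X*(Q*P' + P*D)"
    for Q P P' X D K :: "real poly" by (simp add: algebra_simps)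
  have sc: "smult c p = [:c:] * p" for c and p :: "real poly" by simp
  have k: "[:real (card E) - real (card (insert a S)):] = [:real (card E) - real (card S):] - 1"
    using insert.hyps by (simp add: one_pCons)
  have pd: "pderiv (Q a * P) = Q a * pderiv P + P * [:\<delta> a:]"
    by (simp add: pderiv_mult dQ)
  show ?case
    unfolding L prodins sc k pd X
    by (rule alg)
qed


definition bb :: "real \<Rightarrow> real \<Rightarrow> (nat \<Rightarrow> nat) \<Rightarrow> nat \<Rightarrow> nat \<times> nat \<Rightarrow> real" where
  "bb \<eta> \<alpha> \<sigma> s f = (if \<sigma> s = s then (if snd f = s then - \<eta> else 0)
                      else (if f = (s, \<sigma> s) then - \<alpha> else 0))"

definition dd :: "(nat \<Rightarrow> nat) \<Rightarrow> nat \<Rightarrow> real" where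
  "dd \<sigma> s = (if \<sigma> s = s then 1 else 0)"

lemma card_in: "finite E' \<Longrightarrow> card {f\<in>E'. snd f = s} = card {i. (i, s) \<in> E'}"
proof -
  assume "finite E'"
  have "bij_betw fst {f\<in>E'. snd f = s} {i. (i, s) \<in> E'}"
    by (rule bij_betwI[where g = "\<lambda>i. (i, s)"]) auto
  then show ?thesis by (rule bij_betw_same_card)
qed

lemma charmat_eq:
  assumes "finite E'" "\<forall>i. (i, i) \<notin> E'"
  shows "charmat \<eta> \<alpha> E' s (\<sigma> s) = [:(\<Sum>f\<in>E'. bb \<eta> \<alpha> \<sigma> s f), dd \<sigma> s:]"
proof (cases "\<sigma> s = s")
  case True
  have "(\<Sum>f\<in>E'. bb \<eta> \<alpha> \<sigma> s f) = (\<Sum>f\<in>{f\<in>E'. snd f = s}. - \<eta>)"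
    using True assms(1) by (simp add: bb_def sum.inter_filter[symmetric])
  also have "\<dots> = - \<eta> * real (indeg E' s)"
    using card_in[OF assms(1)] by (simp add: indeg_def)
  finally show ?thesis using True assms(2) by (simp add: charmat_def adj_def dd_def)
next
  case False
  have "(\<Sum>f\<in>E'. bb \<eta> \<alpha> \<sigma> s f) = (\<Sum>f\<in>E'. if f = (s, \<sigma> s) then - \<alpha> else 0)"
    using False by (simp add: bb_def)
  also have "\<dots> = (if (s, \<sigma> s) \<in> E' then - \<alpha> else 0)"
    using assms(1) by (simp add: sum.delta')
  finally show ?thesis using False by (simp add: charmat_def adj_def dd_def)
qed

lemma gpoly_eq:
  assumes "finite E'" "\<forall>i. (i, i) \<notin> E'"
  shows "gpoly n \<eta> \<alpha> E' = (\<Sum>\<sigma> | \<sigma> permutes {..<n}. [:of_int (chi2 n \<sigma>):] *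
            (\<Prod>s\<in>{..<n}. [:(\<Sum>f\<in>E'. bb \<eta> \<alpha> \<sigma> s f), dd \<sigma> s:]))"
  unfolding gpoly_def d2_def of_int_poly
  using charmat_eq[OF assms] by (simp add: lessThan_def)

theorem lemma3p5:
  fixes n :: nat and E :: "(nat \<times> nat) set" and \<eta> \<alpha> :: real
  assumes "n \<ge> 2"
    and "\<eta> \<in> {0, 1}" and "\<alpha> \<in> {-1, 1}"
    and "E \<subseteq> {..<n} \<times> {..<n}"
    and "\<forall>i. (i, i) \<notin> E"
  shows "smult (real (card E) - real n) (gpoly n \<eta> \<alpha> E) + [:0, 1:] * pderiv (gpoly n \<eta> \<alpha> E)
         = (\<Sum>e\<in>E. gpoly n \<eta> \<alpha> (E - {e}))"
proof -
  have fin: "finite E" using assms(4) finite_subset by blast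
  have finP: "finite {\<sigma>. \<sigma> permutes {..<n}}" by (simp add: finite_permutations)
  define P where "P = (\<lambda>\<sigma> E'. \<Prod>s\<in>{..<n}. [:(\<Sum>f\<in>E'. bb \<eta> \<alpha> \<sigma> s f), dd \<sigma> s:])"
  define c where "c = (\<lambda>\<sigma>. [:of_int (chi2 n \<sigma>) :: real:])"
  have g: "gpoly n \<eta> \<alpha> E' = (\<Sum>\<sigma> | \<sigma> permutes {..<n}. c \<sigma> * P \<sigma> E')"
    if "E' \<subseteq> E" for E'
    unfolding P_def c_def
    by (rule gpoly_eq) (use that fin assms(5) finite_subset in auto)
  have eul: "(\<Sum>e\<in>E. P \<sigma> (E - {e})) = smult (real (card E) - real n) (P \<sigma> E) + [:0,1:] * pderiv (P \<sigma> E)"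
    if "\<sigma> permutes {..<n}" for \<sigma>
  proof -
    have u: "\<forall>e\<in>E. \<forall>s\<in>{..<n}. \<forall>t\<in>{..<n}. bb \<eta> \<alpha> \<sigma> s e \<noteq> 0 \<longrightarrow> bb \<eta> \<alpha> \<sigma> t e \<noteq> 0 \<longrightarrow> s = t"
    proof (intro ballI impI)
      fix e s t assume "e \<in> E" "s \<in> {..<n}" "t \<in> {..<n}" "bb \<eta> \<alpha> \<sigma> s e \<noteq> 0" "bb \<eta> \<alpha> \<sigma> t e \<noteq> 0"
      moreover have "\<sigma> x = \<sigma> y \<Longrightarrow> x = y" for x y
        using permutes_inj[OF that] by (simp add: inj_eq)
      ultimately show "s = t" unfolding bb_def
        by (auto split: if_splits)
    qed
    show ?thesis unfolding P_def
      using euler_prod[OF _ fin u, of "dd \<sigma>"] by simp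
  qed
  have sc: "smult k (c \<sigma> * p) = c \<sigma> * smult k p" for k \<sigma> p by (simp add: c_def)
  have pdc: "pderiv (c \<sigma> * p) = c \<sigma> * pderiv p" for \<sigma> p by (simp add: c_def pderiv_mult pderiv_smult)
  have "(\<Sum>e\<in>E. gpoly n \<eta> \<alpha> (E - {e})) = (\<Sum>e\<in>E. \<Sum>\<sigma> | \<sigma> permutes {..<n}. c \<sigma> * P \<sigma> (E - {e}))"
    by (intro sum.cong refl g) auto
  also have "\<dots> = (\<Sum>\<sigma> | \<sigma> permutes {..<n}. c \<sigma> * (\<Sum>e\<in>E. P \<sigma> (E - {e})))"
    by (subst sum.swap) (simp add: sum_distrib_left)
  also have "\<dots> = (\<Sum>\<sigma> | \<sigma> permutes {..<n}. smult (real (card E) - real n) (c \<sigma> * P \<sigma> E) + [:0,1:] * pderiv (c \<sigma> * P \<sigma> E))"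
    proof (intro sum.cong refl)
    fix \<sigma> assume "\<sigma> \<in> {\<sigma>. \<sigma> permutes {..<n}}"
    then have "\<sigma> permutes {..<n}" by simp
    then show "c \<sigma> * (\<Sum>e\<in>E. P \<sigma> (E - {e})) = smult (real (card E) - real n) (c \<sigma> * P \<sigma> E) + [:0,1:] * pderiv (c \<sigma> * P \<sigma> E)"
      by (simp only: eul sc pdc distrib_left mult.left_commute)
  qed
  also have "\<dots> = smult (real (card E) - real n) (\<Sum>\<sigma> | \<sigma> permutes {..<n}. c \<sigma> * P \<sigma> E) + [:0,1:] * pderiv (\<Sum>\<sigma> | \<sigma> permutes {..<n}. c \<sigma> * P \<sigma> E)"
    by (simp add: sum.distrib smult_sum_right pderiv_sum_gen[OF finP] sum_distrib_left)
  finally show ?thesis using g[of E] by simp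
qed

end
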